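(* Let $(X,d)$ be a compact metric space, $Z=\Delta_f(X)$, and $F:X\rightrightarrows Z$ a correspondence with nonempty values which is non expansive for $d_{KR}$: for all $x,x'\in X$ and $u\in F(x)$ there exists $u'\in F(x')$ with $d_{KR}(u,u')\le d(x,x')$. Then the mixed extension $\hat F$ is $1$-Lipschitz (non expansive) from $(Z,d_{KR})$ to itself: for all $u_1,u_2\in Z$ and $v_1\in\hat F(u_1)$, there exists $v_2\in\hat F(u_2)$ with $d_{KR}(v_1,v_2)\le d_{KR}(u_1,u_2)$.
   Context: $d_{KR}(u,v)=\sup\{\int f\,du-\int f\,dv:\ f:X\to\mathbb R\ 1\text{-Lipschitz}\}$ is the Kantorovich–Rubinstein distance on Borel probabilities on $X$. $\Delta_f(X)$ is the set of finitely supported probabilities on $X$. The mixed extension is $$\hat F(u)=\Big\{\sum_{x}u(x)f(x):\ f:X\to Z,\ f(x)\in\mathrm{conv}\,F(x)\ \forall x\Big\}.$$ *)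

theory Defs
  imports "HOL-Analysis.Analysis"
begin

definition supp :: "('a \<Rightarrow> real) \<Rightarrow> 'a set" where
  "supp u = {x. u x \<noteq> 0}"

definition fsprob :: "'a set \<Rightarrow> ('a \<Rightarrow> real) set" where
  "fsprob X = {u. finite (supp u) \<and> supp u \<subseteq> X \<and> (\<forall>x. 0 \<le> u x) \<and> (\<Sum>x\<in>supp u. u x) = 1}"

definition finteg :: "('a \<Rightarrow> real) \<Rightarrow> ('a \<Rightarrow> real) \<Rightarrow> real" where
  "finteg u f = (\<Sum>x\<in>supp u. u x * f x)"

definition dKR :: "'a::metric_space set \<Rightarrow> ('a \<Rightarrow> real) \<Rightarrow> ('a \<Rightarrow> real) \<Rightarrow> real" where
  "dKR X u v = Sup {finteg u f - finteg v f | f. 1-lipschitz_on X f}"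

definition fconv :: "('a \<Rightarrow> real) set \<Rightarrow> ('a \<Rightarrow> real) set" where
  "fconv S = {(\<lambda>y. \<Sum>i\<in>I. c i * g i y) | (I :: nat set) c g.
     finite I \<and> I \<noteq> {} \<and> (\<forall>i\<in>I. 0 \<le> c i \<and> g i \<in> S) \<and> (\<Sum>i\<in>I. c i) = 1}"

definition mixed_ext :: "'a set \<Rightarrow> ('a \<Rightarrow> ('a \<Rightarrow> real) set) \<Rightarrow> ('a \<Rightarrow> real) \<Rightarrow> ('a \<Rightarrow> real) set" where
  "mixed_ext X F u = {(\<lambda>y. \<Sum>x\<in>supp u. u x * f x y) | f. \<forall>x\<in>X. f x \<in> fconv (F x)}"

end

theory Submission
  imports Defs
begin


typedef 'k fsf = "{f :: 'k \<Rightarrow> real. finite {x. f x \<noteq> 0}}" morphisms fs Abs_fsf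
  by (rule exI[of _ "\<lambda>_. 0"]) simp

setup_lifting type_definition_fsf

lemma fs_finite[simp]: "finite {x. fs f x \<noteq> 0}"
  using fs[of f] by simp

instantiation fsf :: (type) real_vector
begin
lift_definition zero_fsf :: "'a fsf" is "\<lambda>_. 0" by simp
lift_definition plus_fsf :: "'a fsf \<Rightarrow> 'a fsf \<Rightarrow> 'a fsf" is "\<lambda>f g x. f x + g x"
proof -
  fix f g :: "'a \<Rightarrow> real" assume "finite {x. f x \<noteq> 0}" "finite {x. g x \<noteq> 0}"
  then show "finite {x. f x + g x \<noteq> 0}" by (rule finite_subset[rotated, OF finite_UnI]) auto
qed
lift_definition uminus_fsf :: "'a fsf \<Rightarrow> 'a fsf" is "\<lambda>f x. - f x" by simp
lift_definition minus_fsf :: "'a fsf \<Rightarrow> 'a fsf \<Rightarrow> 'a fsf" is "\<lambda>f g x. f x - g x"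
proof -
  fix f g :: "'a \<Rightarrow> real" assume "finite {x. f x \<noteq> 0}" "finite {x. g x \<noteq> 0}"
  then show "finite {x. f x - g x \<noteq> 0}" by (rule finite_subset[rotated, OF finite_UnI]) auto
qed
lift_definition scaleR_fsf :: "real \<Rightarrow> 'a fsf \<Rightarrow> 'a fsf" is "\<lambda>r f x. r * f x"
proof -
  fix r and f :: "'a \<Rightarrow> real" assume "finite {x. f x \<noteq> 0}"
  then show "finite {x. r * f x \<noteq> 0}" by (rule finite_subset[rotated]) auto
qed
instance
  by standard (transfer; auto simp: algebra_simps)+
end

lemma fs_zero[simp]: "fs 0 k = 0" by transfer simp
lemma fs_plus[simp]: "fs (f + g) k = fs f k + fs g k" by transfer simp
lemma fs_minus[simp]: "fs (f - g) k = fs f k - fs g k" by transfer simp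
lemma fs_uminus[simp]: "fs (- g) k = - fs g k" by transfer simp
lemma fs_scaleR[simp]: "fs (r *\<^sub>R g) k = r * fs g k" by transfer simp
lemma fs_sum: "fs (\<Sum>i\<in>I. g i) k = (\<Sum>i\<in>I. fs (g i) k)"
  by (induction I rule: infinite_finite_induct) auto

definition fsupp :: "'a fsf \<Rightarrow> 'a set" where "fsupp f = {x. fs f x \<noteq> 0}"

lemma fsupp_finite[simp]: "finite (fsupp f)" by (simp add: fsupp_def)

definition ip :: "'a fsf \<Rightarrow> 'a fsf \<Rightarrow> real" where
  "ip f g = (\<Sum>k\<in>fsupp f \<union> fsupp g. fs f k * fs g k)"

lemma ip_eq: assumes "finite A" "fsupp f \<subseteq> A"
  shows "ip f g = (\<Sum>k\<in>A. fs f k * fs g k)"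
  unfolding ip_def
proof -
  have "(\<Sum>k\<in>fsupp f \<union> fsupp g. fs f k * fs g k) = (\<Sum>k\<in>fsupp f. fs f k * fs g k)"
    by (rule sum.mono_neutral_right) (auto simp: fsupp_def)
  also have "\<dots> = (\<Sum>k\<in>A. fs f k * fs g k)"
    by (rule sum.mono_neutral_left) (use assms in \<open>auto simp: fsupp_def\<close>)
  finally show "(\<Sum>k\<in>fsupp f \<union> fsupp g. fs f k * fs g k) = (\<Sum>k\<in>A. fs f k * fs g k)" .
qed

instantiation fsf :: (type) real_inner
begin
definition inner_fsf :: "'a fsf \<Rightarrow> 'a fsf \<Rightarrow> real" where "inner_fsf = ip"
definition norm_fsf :: "'a fsf \<Rightarrow> real" where "norm_fsf f = sqrt (ip f f)"
definition sgn_fsf :: "'a fsf \<Rightarrow> 'a fsf" where "sgn_fsf f = f /\<^sub>R norm f"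
definition dist_fsf :: "'a fsf \<Rightarrow> 'a fsf \<Rightarrow> real" where "dist_fsf f g = norm (f - g)"
definition uniformity_fsf :: "('a fsf \<times> 'a fsf) filter" where
  "uniformity_fsf = (INF e\<in>{0 <..}. principal {(x, y). dist x y < e})"
definition open_fsf :: "'a fsf set \<Rightarrow> bool" where
  "open_fsf U = (\<forall>x\<in>U. eventually (\<lambda>(x', y). x' = x \<longrightarrow> y \<in> U) uniformity)"
instance
proof
  fix x y z :: "'a fsf" and r :: real
  show "inner x y = inner y x" unfolding inner_fsf_def ip_def
    by (simp add: Un_commute mult.commute)
  have A: "finite (fsupp x \<union> fsupp y \<union> fsupp z)" by simp
  have B: "fsupp (x + y) \<subseteq> fsupp x \<union> fsupp y \<union> fsupp z" by (auto simp: fsupp_def)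
  show "inner (x + y) z = inner x z + inner y z" unfolding inner_fsf_def
    by (subst (1 2 3) ip_eq[OF A]) (use B in \<open>auto simp: algebra_simps sum.distrib\<close>)
  have C: "fsupp (r *\<^sub>R x) \<subseteq> fsupp x" by (auto simp: fsupp_def)
  show "inner (r *\<^sub>R x) y = r * inner x y" unfolding inner_fsf_def
    by (subst (1 2) ip_eq[of "fsupp x"]) (use C in \<open>auto simp: sum_distrib_left algebra_simps\<close>)
  show "0 \<le> inner x x" unfolding inner_fsf_def ip_def by (auto intro: sum_nonneg)
  show "inner x x = 0 \<longleftrightarrow> x = 0"
  proof
    assume "inner x x = 0"
    then have "\<forall>k\<in>fsupp x. fs x k * fs x k = 0"
      unfolding inner_fsf_def ip_def by (subst (asm) sum_nonneg_eq_0_iff) auto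
    then have "\<forall>k. fs x k = 0" by (auto simp: fsupp_def)
    then show "x = 0" by transfer auto
  qed (simp add: inner_fsf_def ip_def)
  show "norm x = sqrt (inner x x)" by (simp add: norm_fsf_def inner_fsf_def)
qed (simp_all add: sgn_fsf_def dist_fsf_def uniformity_fsf_def open_fsf_def)
end

lemma inner_fsf_eq: "finite A \<Longrightarrow> fsupp f \<subseteq> A \<Longrightarrow> inner f g = (\<Sum>k\<in>A. fs f k * fs g k)"
  by (simp add: inner_fsf_def ip_eq)




lemma sep_compact:
  fixes z :: "'a::real_inner"
  assumes "convex S" "compact S" "S \<noteq> {}" "z \<notin> S"
  shows "\<exists>a b. inner a z < b \<and> (\<forall>x\<in>S. inner a x > b)"
proof -
  obtain y where "y \<in> S" and y: "\<And>x. x \<in> S \<Longrightarrow> dist z y \<le> dist z x"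
  proof -
    have "continuous_on S (dist z)" by (intro continuous_intros)
    then show ?thesis using continuous_attains_inf[OF assms(2,3), of "dist z"] that by blast
  qed
  show ?thesis
  proof (intro exI conjI ballI)
    show "(y - z) \<bullet> z < inner (y - z) z + (norm (y - z))\<^sup>2 / 2"
      using \<open>y\<in>S\<close> \<open>z\<notin>S\<close> by auto
  next
    fix x
    assume "x \<in> S"
    have "False" if *: "0 < inner (z - y) (x - y)"
    proof -
      obtain u where "u > 0" "u \<le> 1" "dist (y + u *\<^sub>R (x - y)) z < dist y z"
        using * closer_point_lemma by blast
      then show False using y[of "y + u *\<^sub>R (x - y)"] convexD_alt [OF \<open>convex S\<close>]
        using \<open>x\<in>S\<close> \<open>y\<in>S\<close> by (auto simp: dist_commute algebra_simps)
    qed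
    moreover have "0 < (norm (y - z))\<^sup>2"
      using \<open>y\<in>S\<close> \<open>z\<notin>S\<close> by auto
    then have "0 < inner (y - z) (y - z)"
      unfolding power2_norm_eq_inner by simp
    ultimately show "(y - z) \<bullet> z + (norm (y - z))\<^sup>2 / 2 < (y - z) \<bullet> x"
      by (force simp: field_simps power2_norm_eq_inner inner_commute inner_diff)
  qed
qed

lift_definition ee :: "'a \<Rightarrow> 'a fsf" is "\<lambda>k j. if j = k then 1 else 0"
  by simp

lemma fs_ee[simp]: "fs (ee k) j = (if j = k then 1 else 0)"
  by transfer simp

lemma inner_ee[simp]: "inner a (ee k) = fs a k"
proof -
  have "inner (ee k) a = (\<Sum>j\<in>{k}. fs (ee k) j * fs a j)"
    by (rule inner_fsf_eq) (auto simp: fsupp_def)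
  then show ?thesis by (simp add: inner_commute)
qed




lemma fsprob_facts:
  assumes "u \<in> fsprob X"
  shows "finite (supp u)" "supp u \<subseteq> X" "\<And>x. 0 \<le> u x" "sum u (supp u) = 1"
    "supp u \<noteq> {}" "\<And>x. x \<in> supp u \<Longrightarrow> 0 < u x"
  using assms unfolding fsprob_def supp_def
  by (auto simp: order_le_less)

lemma coupling_exists:
  fixes u1 u2 :: "'a::metric_space \<Rightarrow> real" and D :: real
  assumes u1: "u1 \<in> fsprob X" and u2: "u2 \<in> fsprob X"
    and hD: "\<And>h. 1-lipschitz_on X h \<Longrightarrow> finteg u1 h - finteg u2 h \<le> D"
  shows "\<exists>\<pi>. (\<forall>x y. 0 \<le> \<pi> x y) \<and> (\<forall>x\<in>supp u1. (\<Sum>y\<in>supp u2. \<pi> x y) = u1 x)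
     \<and> (\<forall>y\<in>supp u2. (\<Sum>x\<in>supp u1. \<pi> x y) = u2 y)
     \<and> (\<Sum>x\<in>supp u1. \<Sum>y\<in>supp u2. \<pi> x y * dist x y) \<le> D"
proof (rule ccontr)
  assume nex: "\<not> ?thesis"
  define S1 where "S1 = supp u1"
  define S2 where "S2 = supp u2"
  note f1 = fsprob_facts[OF u1, folded S1_def]
  note f2 = fsprob_facts[OF u2, folded S2_def]
  define vec :: "'a \<Rightarrow> 'a \<Rightarrow> ('a + 'a) option fsf" where
    "vec x y = ee (Some (Inl x)) + ee (Some (Inr y)) + dist x y *\<^sub>R ee None" for x y
  define P where "P = (\<lambda>(x,y). vec x y) ` (S1 \<times> S2)"
  define z where "z = (\<Sum>x\<in>S1. u1 x *\<^sub>R ee (Some (Inl x))) + (\<Sum>y\<in>S2. u2 y *\<^sub>R ee (Some (Inr y))) + D *\<^sub>R ee None"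
  have fv1: "fs (vec x y) (Some (Inl x')) = (if x' = x then 1 else 0)" for x y x'
    by (simp add: vec_def)
  have fv2: "fs (vec x y) (Some (Inr y')) = (if y' = y then 1 else 0)" for x y y'
    by (simp add: vec_def)
  have fv3: "fs (vec x y) None = dist x y" for x y
    by (simp add: vec_def)
  have fz1: "fs z (Some (Inl x)) = u1 x" if "x \<in> S1" for x
    using that f1(1) by (simp add: z_def fs_sum if_distrib cong: if_cong)
  have fz2: "fs z (Some (Inr y)) = u2 y" if "y \<in> S2" for y
    using that f2(1) by (simp add: z_def fs_sum if_distrib cong: if_cong)
  have fz3: "fs z None = D"
    by (simp add: z_def fs_sum)
  have finP: "finite P" using f1(1) f2(1) by (simp add: P_def)
  have nz: "z \<notin> convex hull P"
  proof
    assume "z \<in> convex hull P"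
    then obtain w where w0: "\<forall>p\<in>P. 0 \<le> w p" and wz: "(\<Sum>p\<in>P. w p *\<^sub>R p) = z"
      using convex_hull_finite[OF finP] by auto
    have inj: "inj_on (\<lambda>(x,y). vec x y) (S1\<times>S2)"
    proof (rule inj_onI, clarify)
      fix x y x' y' assume "vec x y = vec x' y'"
      then have "fs (vec x y) (Some (Inl x)) = fs (vec x' y') (Some (Inl x))"
        "fs (vec x y) (Some (Inr y)) = fs (vec x' y') (Some (Inr y))" by auto
      then show "x = x' \<and> y = y'" by (auto simp: fv1 fv2 split: if_splits)
    qed
    define \<pi> where "\<pi> x y = (if x\<in>S1 \<and> y\<in>S2 then w (vec x y) else 0)" for x y
    have zs: "z = (\<Sum>x\<in>S1. \<Sum>y\<in>S2. \<pi> x y *\<^sub>R vec x y)"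
    proof -
      have "z = (\<Sum>q\<in>S1\<times>S2. w ((\<lambda>(x,y). vec x y) q) *\<^sub>R ((\<lambda>(x,y). vec x y) q))"
        unfolding wz[symmetric] P_def by (rule sum.reindex[OF inj, unfolded comp_def])
      also have "\<dots> = (\<Sum>q\<in>S1\<times>S2. \<pi> (fst q) (snd q) *\<^sub>R vec (fst q) (snd q))"
        by (rule sum.cong) (auto simp: \<pi>_def)
      also have "\<dots> = (\<Sum>x\<in>S1. \<Sum>y\<in>S2. \<pi> x y *\<^sub>R vec x y)"
        by (rule sum.cartesian_product[symmetric, unfolded case_prod_beta])
      finally show ?thesis .
    qed
    have "\<exists>\<pi>. (\<forall>x y. 0 \<le> \<pi> x y) \<and> (\<forall>x\<in>supp u1. (\<Sum>y\<in>supp u2. \<pi> x y) = u1 x)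
     \<and> (\<forall>y\<in>supp u2. (\<Sum>x\<in>supp u1. \<pi> x y) = u2 y)
     \<and> (\<Sum>x\<in>supp u1. \<Sum>y\<in>supp u2. \<pi> x y * dist x y) \<le> D"
    proof (intro exI conjI ballI allI)
      fix x y show "0 \<le> \<pi> x y" using w0 by (auto simp: \<pi>_def P_def)
    next
      fix x assume x: "x \<in> supp u1"
      have "u1 x = fs z (Some (Inl x))" using x fz1 S1_def by simp
      also have "\<dots> = (\<Sum>x'\<in>S1. \<Sum>y\<in>S2. \<pi> x' y * (if x = x' then 1 else 0))"
        by (simp add: zs fs_sum fv1)
      also have "\<dots> = (\<Sum>x'\<in>S1. if x = x' then (\<Sum>y\<in>S2. \<pi> x' y) else 0)"
        by (rule sum.cong) auto
      also have "\<dots> = (\<Sum>y\<in>S2. \<pi> x y)" using x f1(1) S1_def by simp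
      finally show "(\<Sum>y\<in>supp u2. \<pi> x y) = u1 x" by (simp add: S2_def)
    next
      fix y assume y: "y \<in> supp u2"
      have "u2 y = fs z (Some (Inr y))" using y fz2 S2_def by simp
      also have "\<dots> = (\<Sum>x\<in>S1. \<Sum>y'\<in>S2. \<pi> x y' * (if y = y' then 1 else 0))"
        by (simp add: zs fs_sum fv2)
      also have "\<dots> = (\<Sum>x\<in>S1. \<pi> x y)"
        using y f2(1) S2_def by (simp add: if_distrib cong: if_cong)
      finally show "(\<Sum>x\<in>supp u1. \<pi> x y) = u2 y" by (simp add: S1_def)
    next
      have "D = fs z None" by (simp add: fz3)
      also have "\<dots> = (\<Sum>x\<in>S1. \<Sum>y\<in>S2. \<pi> x y * dist x y)"
        by (simp add: zs fs_sum fv3)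
      finally show "(\<Sum>x\<in>supp u1. \<Sum>y\<in>supp u2. \<pi> x y * dist x y) \<le> D"
        by (simp add: S1_def S2_def)
    qed
    then show False using nex by blast
  qed
  have Pne: "P \<noteq> {}" using f1(5) f2(5) by (auto simp: P_def)
  obtain a b where ab1: "inner a z < b" and ab2: "\<forall>k\<in>convex hull P. inner a k > b"
    using sep_compact[OF convex_convex_hull finite_imp_compact_convex_hull[OF finP] _ nz] Pne
    by auto
  define \<alpha> where "\<alpha> x = fs a (Some (Inl x))" for x
  define \<beta> where "\<beta> y = fs a (Some (Inr y))" for y
  define \<gamma> where "\<gamma> = fs a None"
  have iv: "inner a (vec x y) = \<alpha> x + \<beta> y + dist x y * \<gamma>" for x y
    by (simp add: vec_def inner_add_right \<alpha>_def \<beta>_def \<gamma>_def)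
  define A where "A = (\<Sum>x\<in>S1. u1 x * \<alpha> x)"
  define B where "B = (\<Sum>y\<in>S2. u2 y * \<beta> y)"
  have iz: "inner a z = A + B + D * \<gamma>"
    by (simp add: z_def inner_add_right inner_sum_right A_def B_def \<alpha>_def \<beta>_def \<gamma>_def mult.commute)
  have sep: "\<alpha> x + \<beta> y + dist x y * \<gamma> > b" if "x\<in>S1" "y\<in>S2" for x y
    using ab2 hull_subset[of P convex] that iv by (force simp: P_def)
  define C0 where "C0 = (\<Sum>x\<in>S1. \<Sum>y\<in>S2. u1 x * u2 y * dist x y)"
  have prod: "(\<Sum>x\<in>S1. \<Sum>y\<in>S2. u1 x * u2 y * (\<alpha> x + \<beta> y + dist x y * \<gamma> - b)) = A + B + C0 * \<gamma> - b"
  proof -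
    have "(\<Sum>x\<in>S1. \<Sum>y\<in>S2. u1 x * u2 y * (\<alpha> x + \<beta> y + dist x y * \<gamma> - b))
       = (\<Sum>x\<in>S1. \<Sum>y\<in>S2. (u1 x * \<alpha> x) * u2 y + u1 x * (u2 y * \<beta> y) + (u1 x * u2 y * dist x y) * \<gamma> - b * u1 x * u2 y)"
      by (simp add: algebra_simps)
    also have "\<dots> = (\<Sum>x\<in>S1. (u1 x * \<alpha> x) * (\<Sum>y\<in>S2. u2 y) + u1 x * B + (\<Sum>y\<in>S2. u1 x * u2 y * dist x y) * \<gamma> - b * u1 x * (\<Sum>y\<in>S2. u2 y))"
      by (simp add: sum.distrib sum_subtractf sum_distrib_left sum_distrib_right B_def)
    also have "\<dots> = (\<Sum>x\<in>S1. u1 x * \<alpha> x + u1 x * B + (\<Sum>y\<in>S2. u1 x * u2 y * dist x y) * \<gamma> - b * u1 x)"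
      using f2(4) by simp
    also have "\<dots> = A + (\<Sum>x\<in>S1. u1 x) * B + C0 * \<gamma> - b * (\<Sum>x\<in>S1. u1 x)"
      by (simp add: sum.distrib sum_subtractf sum_distrib_left sum_distrib_right A_def C0_def)
    also have "\<dots> = A + B + C0 * \<gamma> - b" using f1(4) by simp
    finally show ?thesis .
  qed
  have pos: "0 < (\<Sum>x\<in>S1. \<Sum>y\<in>S2. u1 x * u2 y * (\<alpha> x + \<beta> y + dist x y * \<gamma> - b))"
    using f1 f2 sep by (intro sum_pos mult_pos_pos) auto
  have gam: "C0 * \<gamma> > D * \<gamma>" using pos prod ab1 iz by linarith
  show False
  proof (cases "\<gamma> > 0")
    case False
    then have "\<gamma> < 0" using gam by (cases "\<gamma> = 0") auto
    then have "C0 < D" using gam by (simp add: mult_less_cancel_right)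
    have "\<exists>\<pi>. (\<forall>x y. 0 \<le> \<pi> x y) \<and> (\<forall>x\<in>supp u1. (\<Sum>y\<in>supp u2. \<pi> x y) = u1 x)
     \<and> (\<forall>y\<in>supp u2. (\<Sum>x\<in>supp u1. \<pi> x y) = u2 y)
     \<and> (\<Sum>x\<in>supp u1. \<Sum>y\<in>supp u2. \<pi> x y * dist x y) \<le> D"
      apply (rule exI[of _ "\<lambda>x y. u1 x * u2 y"])
      using f1 f2 \<open>C0 < D\<close>
      by (auto simp: S1_def S2_def C0_def simp flip: sum_distrib_left sum_distrib_right)
    then show False using nex by blast
  next
    case True
    define h where "h w = Min ((\<lambda>y. (\<beta> y - b) / \<gamma> + dist w y) ` S2)" for w
    have hle: "h w \<le> (\<beta> y - b) / \<gamma> + dist w y" if "y \<in> S2" for w y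
      unfolding h_def using that f2(1) by (intro Min_le) auto
    have hex: "\<exists>y\<in>S2. h w = (\<beta> y - b) / \<gamma> + dist w y" for w
    proof -
      have "h w \<in> (\<lambda>y. (\<beta> y - b) / \<gamma> + dist w y) ` S2"
        unfolding h_def using f2(1) f2(5) by (intro Min_in) auto
      then show ?thesis by auto
    qed
    have hlip1: "h w \<le> h w' + dist w w'" for w w'
    proof -
      obtain y where y: "y \<in> S2" "h w' = (\<beta> y - b) / \<gamma> + dist w' y" using hex by blast
      have "h w \<le> (\<beta> y - b) / \<gamma> + dist w y" using hle y by blast
      also have "\<dots> \<le> (\<beta> y - b) / \<gamma> + dist w' y + dist w w'" using dist_triangle[of w y w'] by simp
      finally show ?thesis using y by simp
    qed
    have lip: "1-lipschitz_on X h"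
    proof (rule lipschitz_onI)
      fix x y show "dist (h x) (h y) \<le> 1 * dist x y"
        using hlip1[of x y] hlip1[of y x] by (simp add: dist_real_def dist_commute abs_le_iff)
    qed simp
    have low: "- \<alpha> x / \<gamma> \<le> h x" if "x \<in> S1" for x
      unfolding h_def
    proof (rule Min.boundedI)
      show "finite ((\<lambda>y. (\<beta> y - b) / \<gamma> + dist x y) ` S2)" using f2(1) by simp
      show "(\<lambda>y. (\<beta> y - b) / \<gamma> + dist x y) ` S2 \<noteq> {}" using f2(5) by simp
    next
      fix t assume "t \<in> (\<lambda>y. (\<beta> y - b) / \<gamma> + dist x y) ` S2"
      then obtain y where y: "y \<in> S2" "t = (\<beta> y - b) / \<gamma> + dist x y" by auto
      have "-\<alpha> x < \<beta> y - b + dist x y * \<gamma>" using sep[OF that y(1)] by simp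
      then have "-\<alpha> x / \<gamma> \<le> (\<beta> y - b + dist x y * \<gamma>) / \<gamma>"
        using True by (intro divide_right_mono) auto
      also have "\<dots> = t" using y True by (simp add: field_simps)
      finally show "- \<alpha> x / \<gamma> \<le> t" .
    qed
    have up: "h y \<le> (\<beta> y - b) / \<gamma>" if "y \<in> S2" for y
      using hle[OF that, of y] by simp
    have i1: "(\<Sum>x\<in>S1. u1 x * (- \<alpha> x / \<gamma>)) \<le> finteg u1 h"
      unfolding finteg_def S1_def[symmetric] using low f1(3)
      by (intro sum_mono mult_left_mono) auto
    have i2: "finteg u2 h \<le> (\<Sum>y\<in>S2. u2 y * ((\<beta> y - b) / \<gamma>))"
      unfolding finteg_def S2_def[symmetric] using up f2(3)
      by (intro sum_mono mult_left_mono) auto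
    have e1: "(\<Sum>x\<in>S1. u1 x * (- \<alpha> x / \<gamma>)) = - A / \<gamma>"
      by (simp add: A_def sum_divide_distrib sum_negf)
    have e2: "(\<Sum>y\<in>S2. u2 y * ((\<beta> y - b) / \<gamma>)) = (B - b) / \<gamma>"
    proof -
      have "(\<Sum>y\<in>S2. u2 y * ((\<beta> y - b) / \<gamma>)) = (\<Sum>y\<in>S2. u2 y * \<beta> y - b * u2 y) / \<gamma>"
        by (simp add: sum_divide_distrib algebra_simps)
      also have "\<dots> = (B - b) / \<gamma>" using f2(4) by (simp add: sum_subtractf B_def flip: sum_distrib_left)
      finally show ?thesis .
    qed
    have "D * \<gamma> < b - A - B" using ab1 iz by linarith
    then have "D < (b - A - B) / \<gamma>" using True by (simp add: pos_less_divide_eq)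
    also have "(b - A - B) / \<gamma> = - A / \<gamma> - (B - b) / \<gamma>" by (simp add: diff_divide_distrib)
    also have "\<dots> \<le> finteg u1 h - finteg u2 h" using i1 i2 e1 e2 by linarith
    also have "\<dots> \<le> D" using hD[OF lip] .
    finally show False by simp
  qed
qed




lemma fconv_comb:
  fixes J :: "'b set" and h :: "'b \<Rightarrow> ('a \<Rightarrow> real)"
  assumes fin: "finite J" and jw: "\<forall>j\<in>J. 0 \<le> w j \<and> h j \<in> S" and s1: "sum w J = 1"
  shows "(\<lambda>y. \<Sum>j\<in>J. w j * h j y) \<in> fconv S"
proof -
  define T where "T = h ` J"
  define W where "W t = sum w {j \<in> J. h j = t}" for t
  have eq: "(\<lambda>y. \<Sum>j\<in>J. w j * h j y) = (\<lambda>y. \<Sum>t\<in>T. W t * t y)"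
  proof
    fix y
    have "(\<Sum>j\<in>J. w j * h j y) = (\<Sum>t\<in>T. \<Sum>j\<in>{j\<in>J. h j = t}. w j * h j y)"
      unfolding T_def by (rule sum.image_gen[OF fin])
    also have "\<dots> = (\<Sum>t\<in>T. W t * t y)"
    proof (rule sum.cong[OF refl])
      fix t
      have "(\<Sum>j\<in>{j\<in>J. h j = t}. w j * h j y) = (\<Sum>j\<in>{j\<in>J. h j = t}. w j * t y)"
        by (rule sum.cong) auto
      then show "(\<Sum>j\<in>{j\<in>J. h j = t}. w j * h j y) = W t * t y"
        by (simp add: W_def sum_distrib_right)
    qed
    finally show "(\<Sum>j\<in>J. w j * h j y) = (\<Sum>t\<in>T. W t * t y)" .
  qed
  have sW: "sum W T = 1"
    using s1 unfolding W_def T_def by (simp add: sum.image_gen[OF fin, symmetric])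
  have finT: "finite T" using fin by (simp add: T_def)
  have Tne: "T \<noteq> {}" using s1 by (auto simp: T_def)
  obtain e where e: "bij_betw e {0..<card T} T" using ex_bij_betw_nat_finite[OF finT] by blast
  have eq2: "(\<lambda>y. \<Sum>t\<in>T. W t * t y) = (\<lambda>y. \<Sum>i\<in>{0..<card T}. W (e i) * e i y)"
    by (rule ext, rule sum.reindex_bij_betw[OF e, symmetric])
  have "(\<lambda>y. \<Sum>i\<in>{0..<card T}. W (e i) * e i y) \<in> fconv S"
    unfolding fconv_def
  proof (intro CollectI exI conjI)
    show "finite {0..<card T}" by simp
    show "{0..<card T} \<noteq> {}" using finT Tne by simp
    show "\<forall>i\<in>{0..<card T}. 0 \<le> W (e i) \<and> e i \<in> S"
    proof
      fix i assume "i \<in> {0..<card T}"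
      then have "e i \<in> T" using e by (auto simp: bij_betw_def)
      then show "0 \<le> W (e i) \<and> e i \<in> S" using jw by (auto simp: W_def T_def intro: sum_nonneg)
    qed
    show "(\<Sum>i\<in>{0..<card T}. W (e i)) = 1" using sW sum.reindex_bij_betw[OF e, of W] by simp
  qed simp
  then show ?thesis using eq eq2 by simp
qed

lemma fconv_single: "g \<in> S \<Longrightarrow> g \<in> fconv S"
  using fconv_comb[of "{()}" "\<lambda>_. 1" "\<lambda>_. g" S] by simp

lemma finteg_lin:
  fixes J :: "'b set"
  assumes "finite J" "\<forall>j\<in>J. finite (supp (h j))"
  shows "finteg (\<lambda>y. \<Sum>j\<in>J. w j * h j y) \<phi> = (\<Sum>j\<in>J. w j * finteg (h j) \<phi>)"
proof -
  define A where "A = (\<Union>j\<in>J. supp (h j))"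
  have finA: "finite A" using assms by (simp add: A_def)
  have sub: "supp (\<lambda>y. \<Sum>j\<in>J. w j * h j y) \<subseteq> A"
    by (auto simp: supp_def A_def intro: ccontr dest: sum.neutral[rotated])
  have fi: "finteg v \<phi> = (\<Sum>y\<in>A. v y * \<phi> y)" if "supp v \<subseteq> A" for v
    unfolding finteg_def by (rule sum.mono_neutral_left[OF finA that]) (auto simp: supp_def)
  have "finteg (\<lambda>y. \<Sum>j\<in>J. w j * h j y) \<phi> = (\<Sum>y\<in>A. (\<Sum>j\<in>J. w j * h j y) * \<phi> y)"
    by (rule fi[OF sub])
  also have "\<dots> = (\<Sum>j\<in>J. w j * (\<Sum>y\<in>A. h j y * \<phi> y))"
    by (simp add: sum_distrib_right sum_distrib_left mult.assoc sum.swap[of _ A])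
  also have "\<dots> = (\<Sum>j\<in>J. w j * finteg (h j) \<phi>)"
    by (rule sum.cong[OF refl], subst fi[of "h _"]) (auto simp: A_def)
  finally show ?thesis .
qed

lemma dKR_upper:
  assumes "compact X" "g \<in> fsprob X" "g' \<in> fsprob X" "1-lipschitz_on X \<phi>"
  shows "finteg g \<phi> - finteg g' \<phi> \<le> dKR X g g'"
proof -
  obtain B where B: "\<forall>x\<in>X. \<forall>y\<in>X. dist x y \<le> B"
    using compact_imp_bounded[OF assms(1)] bounded_two_points by blast
  note a = fsprob_facts[OF assms(2)] and b = fsprob_facts[OF assms(3)]
  have bd: "finteg g f - finteg g' f \<le> B" if "1-lipschitz_on X f" for f
  proof -
    have "finteg g f = (\<Sum>x\<in>supp g. \<Sum>y\<in>supp g'. g x * g' y * f x)"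
      unfolding finteg_def using b(4) by (simp add: sum_distrib_left[symmetric] mult.commute mult.left_commute)
    moreover have "finteg g' f = (\<Sum>x\<in>supp g. \<Sum>y\<in>supp g'. g x * g' y * f y)"
    proof -
      have "(\<Sum>x\<in>supp g. \<Sum>y\<in>supp g'. g x * g' y * f y) = (\<Sum>x\<in>supp g. g x * (\<Sum>y\<in>supp g'. g' y * f y))"
        by (simp add: sum_distrib_left mult.assoc)
      also have "\<dots> = (\<Sum>y\<in>supp g'. g' y * f y)" using a(4) by (simp add: sum_distrib_right[symmetric])
      finally show ?thesis unfolding finteg_def by simp
    qed
    ultimately have "finteg g f - finteg g' f = (\<Sum>x\<in>supp g. \<Sum>y\<in>supp g'. g x * g' y * (f x - f y))"
      by (simp add: sum_subtractf right_diff_distrib)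
    also have "\<dots> \<le> (\<Sum>x\<in>supp g. \<Sum>y\<in>supp g'. g x * g' y * B)"
    proof (intro sum_mono mult_left_mono)
      fix x y assume "x \<in> supp g" "y \<in> supp g'"
      then have "x \<in> X" "y \<in> X" using a(2) b(2) by auto
      then have "f x - f y \<le> dist x y" using lipschitz_onD[OF that, of x y] by (simp add: dist_real_def)
      then show "f x - f y \<le> B" using B \<open>x\<in>X\<close> \<open>y\<in>X\<close> by force
      show "0 \<le> g x * g' y" using a(3) b(3) by simp
    qed
    also have "\<dots> = B" using a(4) b(4)
      by (simp add: sum_distrib_right[symmetric] sum_distrib_left[symmetric])
    finally show ?thesis .
  qed
  show ?thesis unfolding dKR_def
    by (rule cSup_upper) (use assms(4) bd in \<open>auto intro!: bdd_aboveI\<close>)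
qed

lemma dKR_le:
  assumes "\<And>f. 1-lipschitz_on X f \<Longrightarrow> finteg v1 f - finteg v2 f \<le> D"
  shows "dKR X v1 v2 \<le> D"
  unfolding dKR_def
proof (rule cSup_least)
  have "1-lipschitz_on X (\<lambda>_. 0::real)" by (rule lipschitz_onI) auto
  then show "{finteg v1 f - finteg v2 f |f. 1-lipschitz_on X f} \<noteq> {}" by blast
qed (use assms in auto)




theorem mainTheorem13:
  fixes X :: "'a::metric_space set"
    and F :: "'a \<Rightarrow> ('a \<Rightarrow> real) set"
  assumes "compact X"
    and "\<forall>x\<in>X. F x \<subseteq> fsprob X \<and> F x \<noteq> {}"
    and "\<forall>x\<in>X. \<forall>x'\<in>X. \<forall>u\<in>F x. \<exists>u'\<in>F x'. dKR X u u' \<le> dist x x'"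
  shows "\<forall>u1\<in>fsprob X. \<forall>u2\<in>fsprob X. \<forall>v1\<in>mixed_ext X F u1.
           \<exists>v2\<in>mixed_ext X F u2. dKR X v1 v2 \<le> dKR X u1 u2"
proof (intro ballI)
  fix u1 u2 v1 assume u1: "u1 \<in> fsprob X" and u2: "u2 \<in> fsprob X" and v1: "v1 \<in> mixed_ext X F u1"
  have "\<exists>f. v1 = (\<lambda>y. \<Sum>x\<in>supp u1. u1 x * f x y) \<and> (\<forall>x\<in>X. f x \<in> fconv (F x))"
    using v1 unfolding mixed_ext_def by (rule CollectE) (erule exE, rule exI, assumption)
  then obtain f where fXv: "v1 = (\<lambda>y. \<Sum>x\<in>supp u1. u1 x * f x y) \<and> (\<forall>x\<in>X. f x \<in> fconv (F x))"
    by (elim exE)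
  have fX: "\<forall>x\<in>X. f x \<in> fconv (F x)" using fXv by (rule conjunct2)
  have v1eq: "v1 = (\<lambda>y. \<Sum>x\<in>supp u1. u1 x * f x y)" using fXv by (rule conjunct1)
  define P where "P x I c g \<longleftrightarrow> f x = (\<lambda>y. \<Sum>i\<in>I. c i * g i y) \<and> finite I \<and> I \<noteq> {} \<and> (\<forall>i\<in>I. 0 \<le> c i \<and> g i \<in> F x) \<and> sum c I = 1"
    for x and I :: "nat set" and c :: "nat \<Rightarrow> real" and g :: "nat \<Rightarrow> 'a \<Rightarrow> real"
  have "\<forall>x\<in>X. \<exists>I c g. P x I c g"
    using fX unfolding fconv_def P_def mem_Collect_eq .
  from bchoice[OF this] obtain I where "\<forall>x\<in>X. \<exists>c g. P x (I x) c g" by (elim exE)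
  from bchoice[OF this] obtain c where "\<forall>x\<in>X. \<exists>g. P x (I x) (c x) g" by (elim exE)
  from bchoice[OF this] obtain g where "\<forall>x\<in>X. P x (I x) (c x) (g x)" by (elim exE)
  then have Icg: "\<forall>x\<in>X. finite (I x) \<and> I x \<noteq> {}
      \<and> (\<forall>i\<in>I x. 0 \<le> c x i \<and> g x i \<in> F x) \<and> sum (c x) (I x) = 1"
    and Icf: "\<forall>x\<in>X. f x = (\<lambda>y. \<Sum>i\<in>I x. c x i * g x i y)"
    unfolding P_def by simp_all
  have "\<forall>t\<in>{(x,x',i). x\<in>X \<and> x'\<in>X \<and> i\<in>I x}. \<exists>u'. u' \<in> F (fst (snd t)) \<and> dKR X (g (fst t) (snd (snd t))) u' \<le> dist (fst t) (fst (snd t))"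
    using assms(3) Icg by fastforce
  from bchoice[OF this] obtain G where G: "\<forall>t\<in>{(x,x',i). x\<in>X \<and> x'\<in>X \<and> i\<in>I x}. G t \<in> F (fst (snd t)) \<and> dKR X (g (fst t) (snd (snd t))) (G t) \<le> dist (fst t) (fst (snd t))"
    by (elim exE)
  define g' where "g' x x' i = G (x,x',i)" for x x' i
  have g': "\<forall>x\<in>X. \<forall>x'\<in>X. \<forall>i\<in>I x. g' x x' i \<in> F x' \<and> dKR X (g x i) (g' x x' i) \<le> dist x x'"
    using G unfolding g'_def by fastforce
  have "\<exists>\<pi>. (\<forall>x y. 0 \<le> \<pi> x y) \<and> (\<forall>x\<in>supp u1. (\<Sum>y\<in>supp u2. \<pi> x y) = u1 x)
     \<and> (\<forall>y\<in>supp u2. (\<Sum>x\<in>supp u1. \<pi> x y) = u2 y)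
     \<and> (\<Sum>x\<in>supp u1. \<Sum>y\<in>supp u2. \<pi> x y * dist x y) \<le> dKR X u1 u2"
    by (rule coupling_exists[OF u1 u2]) (rule dKR_upper[OF assms(1) u1 u2])
  then obtain \<pi> where \<pi>0: "\<forall>x y. 0 \<le> \<pi> x y" and \<pi>1: "\<forall>x\<in>supp u1. (\<Sum>y\<in>supp u2. \<pi> x y) = u1 x"
    and \<pi>2: "\<forall>y\<in>supp u2. (\<Sum>x\<in>supp u1. \<pi> x y) = u2 y"
    and \<pi>c: "(\<Sum>x\<in>supp u1. \<Sum>y\<in>supp u2. \<pi> x y * dist x y) \<le> dKR X u1 u2"
    by (elim exE conjE)
  define S1 where "S1 = supp u1"
  define S2 where "S2 = supp u2"
  note f1 = fsprob_facts[OF u1, folded S1_def]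
  note f2 = fsprob_facts[OF u2, folded S2_def]
  define J where "J = Sigma S1 I"
  have finJ: "finite J" unfolding J_def using f1(1) f1(2) Icg by (intro finite_SigmaI) auto
  define f2' where "f2' x' = (if x' \<in> S2 then (\<lambda>y. \<Sum>p\<in>J. (case p of (x,i) \<Rightarrow> \<pi> x x' / u2 x' * c x i)
       * (case p of (x,i) \<Rightarrow> g' x x' i) y) else (SOME g. g \<in> F x'))" for x'
  define v2 where "v2 = (\<lambda>y. \<Sum>x'\<in>S2. u2 x' * f2' x' y)"
  have inF: "\<And>x. x \<in> X \<Longrightarrow> F x \<subseteq> fsprob X" using assms(2) by blast
  have v2in: "v2 \<in> mixed_ext X F u2"
    unfolding mixed_ext_def v2_def S2_def
  proof (intro CollectI exI conjI ballI)
    fix x' assume x': "x' \<in> X"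
    show "f2' x' \<in> fconv (F x')"
    proof (cases "x' \<in> S2")
      case True
      have s: "(\<Sum>p\<in>J. case p of (x,i) \<Rightarrow> \<pi> x x' / u2 x' * c x i) = 1"
      proof -
        have "(\<Sum>p\<in>J. case p of (x,i) \<Rightarrow> \<pi> x x' / u2 x' * c x i)
            = (\<Sum>x\<in>S1. \<Sum>i\<in>I x. \<pi> x x' / u2 x' * c x i)"
          unfolding J_def using f1(1,2) Icg by (subst sum.Sigma) auto
        also have "\<dots> = (\<Sum>x\<in>S1. \<pi> x x' / u2 x')"
        proof (intro sum.cong refl)
          fix x assume "x \<in> S1"
          then have "sum (c x) (I x) = 1" using f1(2) Icg by blast
          then show "(\<Sum>i\<in>I x. \<pi> x x' / u2 x' * c x i) = \<pi> x x' / u2 x'"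
            using sum_distrib_left[of "\<pi> x x' / u2 x'" "c x" "I x"] by (simp only: mult_1_right)
        qed
        also have "\<dots> = 1" using \<pi>2 True f2(6)[OF True]
          by (simp add: S1_def S2_def flip: sum_divide_distrib)
        finally show ?thesis .
      qed
      show ?thesis unfolding f2'_def if_P[OF True]
      proof (rule fconv_comb[OF finJ _ s], intro ballI)
        fix p assume "p \<in> J"
        then obtain x i where p: "p = (x,i)" "x \<in> S1" "i \<in> I x" by (auto simp: J_def)
        then have xX: "x \<in> X" using f1(2) by blast
        have "0 \<le> c x i" using Icg xX p(3) by blast
        moreover have "0 \<le> \<pi> x x'" using \<pi>0 by blast
        moreover have "0 < u2 x'" using f2(6)[OF True] .
        moreover have "g' x x' i \<in> F x'" using g' xX x' p(3) by blast
        ultimately show "0 \<le> (case p of (x,i) \<Rightarrow> \<pi> x x' / u2 x' * c x i) \<and> (case p of (x,i) \<Rightarrow> g' x x' i) \<in> F x'"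
          unfolding p by simp
      qed
    next
      case False
      have "F x' \<noteq> {}" using assms(2) x' by blast
      then have "(SOME g. g \<in> F x') \<in> F x'" by (simp add: some_in_eq)
      then show ?thesis unfolding f2'_def if_not_P[OF False] by (rule fconv_single)
    qed
  qed simp
  show "\<exists>v2\<in>mixed_ext X F u2. dKR X v1 v2 \<le> dKR X u1 u2"
  proof (intro bexI[OF _ v2in] dKR_le)
    fix \<phi> :: "'a \<Rightarrow> real" assume \<phi>: "1-lipschitz_on X \<phi>"
    define K where "K = S2 \<times> J"
    have finK: "finite K" using f2(1) finJ by (simp add: K_def)
    have fins: "finite (supp u)" if "x \<in> X" "u \<in> F x" for x u
    proof -
      have "u \<in> fsprob X" using inF that by blast
      then show ?thesis by (rule fsprob_facts(1))
    qed
    have supJ: "\<forall>p\<in>J. finite (supp (case p of (x,i) \<Rightarrow> g x i))"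
    proof
      fix p assume "p \<in> J"
      then obtain x i where p: "p = (x,i)" "x \<in> S1" "i \<in> I x" by (auto simp: J_def)
      then have xX: "x \<in> X" using f1(2) by blast
      have "g x i \<in> F x" using Icg xX p(3) by blast
      then show "finite (supp (case p of (x,i) \<Rightarrow> g x i))" using fins xX p(1) by simp
    qed
    have supK: "\<forall>q\<in>K. finite (supp (case q of (x',x,i) \<Rightarrow> g' x x' i))"
    proof
      fix q assume "q \<in> K"
      then obtain x' x i where q: "q = (x',x,i)" "x' \<in> S2" "x \<in> S1" "i \<in> I x" by (auto simp: K_def J_def)
      then have xX: "x \<in> X" "x' \<in> X" using f1(2) f2(2) by blast+
      have "g' x x' i \<in> F x'" using g' xX q(4) by blast
      then show "finite (supp (case q of (x',x,i) \<Rightarrow> g' x x' i))" using fins xX q(1) by simp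
    qed
    have v1c: "v1 = (\<lambda>y. \<Sum>p\<in>J. (case p of (x,i) \<Rightarrow> u1 x * c x i) * (case p of (x,i) \<Rightarrow> g x i) y)"
    proof
      fix y
      have "v1 y = (\<Sum>x\<in>S1. \<Sum>i\<in>I x. u1 x * c x i * g x i y)"
        unfolding v1eq S1_def[symmetric] using f1(2) Icf
        by (intro sum.cong refl) (auto simp: sum_distrib_left mult.assoc)
      also have "\<dots> = (\<Sum>p\<in>J. (case p of (x,i) \<Rightarrow> u1 x * c x i) * (case p of (x,i) \<Rightarrow> g x i) y)"
        unfolding J_def using f1(1,2) Icg by (subst sum.Sigma) (auto intro!: sum.cong)
      finally show "v1 y = \<dots>" .
    qed
    have v2c: "v2 = (\<lambda>y. \<Sum>q\<in>K. (case q of (x',x,i) \<Rightarrow> \<pi> x x' * c x i) * (case q of (x',x,i) \<Rightarrow> g' x x' i) y)"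
    proof
      fix y
      have "v2 y = (\<Sum>x'\<in>S2. \<Sum>p\<in>J. (case p of (x,i) \<Rightarrow> \<pi> x x' * c x i * g' x x' i y))"
        unfolding v2_def f2'_def
      proof (intro sum.cong refl)
        fix x' assume x': "x' \<in> S2"
        then have "u2 x' \<noteq> 0" using f2(6) by force
        then show "u2 x' * (if x' \<in> S2 then (\<lambda>y. \<Sum>p\<in>J. (case p of (x,i) \<Rightarrow> \<pi> x x' / u2 x' * c x i)
       * (case p of (x,i) \<Rightarrow> g' x x' i) y) else (SOME g. g \<in> F x')) y
           = (\<Sum>p\<in>J. (case p of (x,i) \<Rightarrow> \<pi> x x' * c x i * g' x x' i y))"
          using x' by (auto simp: sum_distrib_left split: prod.splits intro!: sum.cong)
      qed
      also have "\<dots> = (\<Sum>q\<in>K. (case q of (x',x,i) \<Rightarrow> \<pi> x x' * c x i) * (case q of (x',x,i) \<Rightarrow> g' x x' i) y)"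
        unfolding K_def by (subst sum.cartesian_product) (auto intro!: sum.cong)
      finally show "v2 y = \<dots>" .
    qed
    define F1 where "F1 p = (case p of (x,i) \<Rightarrow> finteg (g x i) \<phi>)" for p
    have e1: "finteg v1 \<phi> = (\<Sum>q\<in>K. (case q of (x',x,i) \<Rightarrow> \<pi> x x' * c x i * finteg (g x i) \<phi>))"
    proof -
      have "finteg v1 \<phi> = (\<Sum>p\<in>J. (case p of (x,i) \<Rightarrow> u1 x * c x i) * finteg (case p of (x,i) \<Rightarrow> g x i) \<phi>)"
        unfolding v1c by (rule finteg_lin[OF finJ supJ])
      also have "\<dots> = (\<Sum>p\<in>J. \<Sum>x'\<in>S2. (case p of (x,i) \<Rightarrow> \<pi> x x' * c x i * finteg (g x i) \<phi>))"
      proof (intro sum.cong refl)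
        fix p assume "p \<in> J"
        then obtain x i where p: "p = (x,i)" "x \<in> S1" by (auto simp: J_def)
        show "(case p of (x,i) \<Rightarrow> u1 x * c x i) * finteg (case p of (x,i) \<Rightarrow> g x i) \<phi>
           = (\<Sum>x'\<in>S2. (case p of (x,i) \<Rightarrow> \<pi> x x' * c x i * finteg (g x i) \<phi>))"
        proof -
          have "u1 x = (\<Sum>x'\<in>S2. \<pi> x x')" using \<pi>1 p(2) by (simp add: S1_def S2_def)
          then have "u1 x * c x i * finteg (g x i) \<phi> = (\<Sum>x'\<in>S2. \<pi> x x' * (c x i * finteg (g x i) \<phi>))"
            by (simp add: sum_distrib_right mult.assoc)
          then show ?thesis using p(1) by (simp add: mult.assoc)
        qed
      qed
      also have "\<dots> = (\<Sum>q\<in>K. (case q of (x',x,i) \<Rightarrow> \<pi> x x' * c x i * finteg (g x i) \<phi>))"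
        unfolding K_def by (subst sum.swap) (subst sum.cartesian_product, auto intro!: sum.cong)
      finally show ?thesis .
    qed
    have e2: "finteg v2 \<phi> = (\<Sum>q\<in>K. (case q of (x',x,i) \<Rightarrow> \<pi> x x' * c x i * finteg (g' x x' i) \<phi>))"
      unfolding v2c by (subst finteg_lin[OF finK supK]) (auto intro!: sum.cong)
    have "finteg v1 \<phi> - finteg v2 \<phi> = (\<Sum>q\<in>K. (case q of (x',x,i) \<Rightarrow> \<pi> x x' * c x i * (finteg (g x i) \<phi> - finteg (g' x x' i) \<phi>)))"
      unfolding e1 e2 by (simp add: sum_subtractf[symmetric] split_def right_diff_distrib)
    also have "\<dots> \<le> (\<Sum>q\<in>K. (case q of (x',x,i) \<Rightarrow> \<pi> x x' * c x i * dist x x'))"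
    proof (intro sum_mono)
      fix q assume "q \<in> K"
      then obtain x' x i where q: "q = (x',x,i)" "x' \<in> S2" "x \<in> S1" "i \<in> I x" by (auto simp: K_def J_def)
      have X: "x \<in> X" "x' \<in> X" using q f1(2) f2(2) by auto
      have "finteg (g x i) \<phi> - finteg (g' x x' i) \<phi> \<le> dKR X (g x i) (g' x x' i)"
        using dKR_upper[OF assms(1) _ _ \<phi>] inF X Icg g' q by blast
      also have "\<dots> \<le> dist x x'" using g' X q by blast
      finally show "(case q of (x',x,i) \<Rightarrow> \<pi> x x' * c x i * (finteg (g x i) \<phi> - finteg (g' x x' i) \<phi>))
          \<le> (case q of (x',x,i) \<Rightarrow> \<pi> x x' * c x i * dist x x')"
        using q \<pi>0 Icg X by (auto intro!: mult_left_mono)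
    qed
    also have "\<dots> = (\<Sum>x'\<in>S2. \<Sum>x\<in>S1. \<Sum>i\<in>I x. \<pi> x x' * c x i * dist x x')"
      unfolding K_def J_def using f1(1,2) Icg
      by (subst sum.cartesian_product[symmetric], intro sum.cong refl, subst sum.Sigma) (auto intro!: sum.cong)
    also have "\<dots> = (\<Sum>x'\<in>S2. \<Sum>x\<in>S1. \<pi> x x' * dist x x')"
    proof (intro sum.cong refl)
      fix x' x assume "x \<in> S1"
      then have "sum (c x) (I x) = 1" using Icg f1(2) by auto
      then show "(\<Sum>i\<in>I x. \<pi> x x' * c x i * dist x x') = \<pi> x x' * dist x x'"
        by (simp add: sum_distrib_left[symmetric] sum_distrib_right[symmetric] mult.commute mult.left_commute)
    qed
    also have "\<dots> = (\<Sum>x\<in>S1. \<Sum>x'\<in>S2. \<pi> x x' * dist x x')" by (rule sum.swap)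
    also have "\<dots> \<le> dKR X u1 u2" using \<pi>c by (simp add: S1_def S2_def)
    finally show "finteg v1 \<phi> - finteg v2 \<phi> \<le> dKR X u1 u2" .
  qed
qed


end
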